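(* Let $\mathcal P$ be a finite-dimensional Poisson $n$-Lie algebra. Then for all $i,j\in\mathbb N$, all $1\le k\le n$ and all $i_1,\dots,i_k\in\mathbb N$: $$\mathcal P^i\cdot\mathcal P^j\subseteq\mathcal P^{i+j},\qquad [\mathcal P^{i_1},\dots,\mathcal P^{i_k},\mathcal P,\dots,\mathcal P]\subseteq\mathcal P^{i_1+\cdots+i_k-k+2},$$ $$\mathcal P^{(i)}\subseteq\mathcal P^{2^{i-1}},\qquad (\mathcal P^{(i)})^{(j)}=\mathcal P^{(i+j-1)},$$ where in the second relation the bracket has $n-k$ arguments equal to $\mathcal P$.
   Context: A Poisson $n$-Lie algebra is a commutative associative algebra $(\mathcal P,\cdot)$ with an $n$-linear skew-symmetric bracket satisfying the fundamental identity $[x_1,\dots,x_{n-1},[y_1,\dots,y_n]]=\sum_{i=1}^n[y_1,\dots,[x_1,\dots,x_{n-1},y_i],\dots,y_n]$ and the Leibniz rule $[y\cdot z,x_2,\dots,x_n]=y\cdot[z,x_2,\dots,x_n]+z\cdot[y,x_2,\dots,x_n]$. For subspaces, $X\cdot Y$ and $[X_1,\dots,X_n]$ denote the linear spans of the corresponding products/brackets. An ideal $\mathcal I$ is a subspace with $\mathcal P\cdot\mathcal I\subseteq\mathcal I$ and $[\mathcal I,\mathcal P,\dots,\mathcal P]\subseteq\mathcal I$. For an ideal $\mathcal I$: $\mathcal I^{(1)}=\mathcal I$, $\mathcal I^{(k+1)}=[\mathcal I^{(k)},\mathcal I^{(k)},\mathcal P,\dots,\mathcal P]+\mathcal I^{(k)}\cdot\mathcal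 I^{(k)}$; $\mathcal I^1=\mathcal I$, $\mathcal I^{k+1}=[\mathcal I^k,\mathcal I,\mathcal P,\dots,\mathcal P]+\mathcal I^k\cdot\mathcal I$. These are ideals; in particular $(\mathcal P^{(i)})^{(j)}$ is the $j$-th derived term of the ideal $\mathcal P^{(i)}$. *)

theory Defs
  imports Main "HOL.Vector_Spaces"
begin

text \<open>The n-ary bracket takes its arguments as a function x :: nat => 'v,
  the arguments being x 0, ..., x (n-1) (values at indices >= n are ignored).\<close>

definition poisson_nlie ::
  "('k::field \<Rightarrow> 'v::ab_group_add \<Rightarrow> 'v) \<Rightarrow> ('v \<Rightarrow> 'v \<Rightarrow> 'v) \<Rightarrow> ((nat \<Rightarrow> 'v) \<Rightarrow> 'v) \<Rightarrow> nat \<Rightarrow> bool"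
where
  "poisson_nlie scale mult br n \<longleftrightarrow>
     vector_space scale \<and> n \<ge> 2 \<and>
     (\<forall>x y. mult x y = mult y x) \<and>
     (\<forall>x y z. mult (mult x y) z = mult x (mult y z)) \<and>
     (\<forall>x y z. mult (x + y) z = mult x z + mult y z) \<and>
     (\<forall>a x y. mult (scale a x) y = scale a (mult x y)) \<and>
     (\<forall>x y. (\<forall>i<n. x i = y i) \<longrightarrow> br x = br y) \<and>
     (\<forall>x i y z. i < n \<longrightarrow> br (x(i := y + z)) = br (x(i := y)) + br (x(i := z))) \<and>
     (\<forall>x i a y. i < n \<longrightarrow> br (x(i := scale a y)) = scale a (br (x(i := y)))) \<and>
     (\<forall>x i j. i < j \<and> j < n \<longrightarrow> br (x(i := x j, j := x i)) = - br x) \<and>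
     (\<forall>x y. br (x(n - 1 := br y)) = (\<Sum>i<n. br (y(i := br (x(n - 1 := y i)))))) \<and>
     (\<forall>x y z. br (x(0 := mult y z)) = mult y (br (x(0 := z))) + mult z (br (x(0 := y))))"

definition fin_dim :: "('k::field \<Rightarrow> 'v::ab_group_add \<Rightarrow> 'v) \<Rightarrow> bool" where
  "fin_dim scale \<longleftrightarrow> (\<exists>B. finite B \<and> module.span scale B = UNIV)"

definition sprod :: "('k::field \<Rightarrow> 'v::ab_group_add \<Rightarrow> 'v) \<Rightarrow> ('v \<Rightarrow> 'v \<Rightarrow> 'v) \<Rightarrow> 'v set \<Rightarrow> 'v set \<Rightarrow> 'v set" where
  "sprod scale mult X Y = module.span scale {mult x y | x y. x \<in> X \<and> y \<in> Y}"

definition sbr :: "('k::field \<Rightarrow> 'v::ab_group_add \<Rightarrow> 'v) \<Rightarrow> ((nat \<Rightarrow> 'v) \<Rightarrow> 'v) \<Rightarrow> nat \<Rightarrow> (nat \<Rightarrow> 'v set) \<Rightarrow> 'v set" where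
  "sbr scale br n S = module.span scale {br x | x. \<forall>i<n. x i \<in> S i}"

definition ssum :: "('k::field \<Rightarrow> 'v::ab_group_add \<Rightarrow> 'v) \<Rightarrow> 'v set \<Rightarrow> 'v set \<Rightarrow> 'v set" where
  "ssum scale A B = module.span scale (A \<union> B)"

text \<open>Shifted series: index m corresponds to the (m+1)-th term.\<close>
primrec derived_aux where
  "derived_aux scale mult br n I 0 = I"
| "derived_aux scale mult br n I (Suc m) =
     (let J = derived_aux scale mult br n I m in
      ssum scale (sbr scale br n (\<lambda>t. if t = 0 then J else if t = 1 then J else UNIV))
                 (sprod scale mult J J))"

primrec lower_aux where
  "lower_aux scale mult br n I 0 = I"
| "lower_aux scale mult br n I (Suc m) =
     (let J = lower_aux scale mult br n I m in
      ssum scale (sbr scale br n (\<lambda>t. if t = 0 then J else if t = 1 then I else UNIV))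
                 (sprod scale mult J I))"

text \<open>I^(k) (derived series) and I^k (lower series), for k >= 1 (I^(1) = I^1 = I).\<close>
definition derived where
  "derived scale mult br n I k = derived_aux scale mult br n I (k - 1)"

definition lower where
  "lower scale mult br n I k = lower_aux scale mult br n I (k - 1)"

end

theory Submission imports Defs begin

locale pn =
  fixes scale :: "'k::field \<Rightarrow> 'v::ab_group_add \<Rightarrow> 'v"
    and mult :: "'v \<Rightarrow> 'v \<Rightarrow> 'v"
    and br :: "(nat \<Rightarrow> 'v) \<Rightarrow> 'v"
    and n :: nat
  assumes P: "poisson_nlie scale mult br n"
begin

lemmas PP = P[unfolded poisson_nlie_def]
lemma vs: "vector_space scale" using PP by (rule conjunct1)
sublocale vs: vector_space scale by (rule vs)

lemma n2: "n \<ge> 2" using PP[THEN conjunct2, THEN conjunct1] by blast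
lemma mcomm: "mult x y = mult y x" using PP[THEN conjunct2, THEN conjunct2, THEN conjunct1] by blast
lemma massoc: "mult (mult x y) z = mult x (mult y z)" using PP[THEN conjunct2, THEN conjunct2, THEN conjunct2, THEN conjunct1] by blast
lemma madd: "mult (x + y) z = mult x z + mult y z" using PP[THEN conjunct2, THEN conjunct2, THEN conjunct2, THEN conjunct2, THEN conjunct1] by blast
lemma mscale: "mult (scale a x) y = scale a (mult x y)" using PP[THEN conjunct2, THEN conjunct2, THEN conjunct2, THEN conjunct2, THEN conjunct2, THEN conjunct1] by blast
lemma bcong: "(\<And>i. i < n \<Longrightarrow> x i = y i) \<Longrightarrow> br x = br y" using PP[THEN conjunct2, THEN conjunct2, THEN conjunct2, THEN conjunct2, THEN conjunct2, THEN conjunct2, THEN conjunct1] by blast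
lemma badd: "i < n \<Longrightarrow> br (x(i := y + z)) = br (x(i := y)) + br (x(i := z))"
  using PP[THEN conjunct2, THEN conjunct2, THEN conjunct2, THEN conjunct2, THEN conjunct2, THEN conjunct2, THEN conjunct2, THEN conjunct1] by blast
lemma bscale: "i < n \<Longrightarrow> br (x(i := scale a y)) = scale a (br (x(i := y)))"
  using PP[THEN conjunct2, THEN conjunct2, THEN conjunct2, THEN conjunct2, THEN conjunct2, THEN conjunct2, THEN conjunct2, THEN conjunct2, THEN conjunct1] by blast
lemma bskew0: "i < j \<Longrightarrow> j < n \<Longrightarrow> br (x(i := x j, j := x i)) = - br x"
  using PP[THEN conjunct2, THEN conjunct2, THEN conjunct2, THEN conjunct2, THEN conjunct2, THEN conjunct2, THEN conjunct2, THEN conjunct2, THEN conjunct2, THEN conjunct1] by blast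
lemma bFI0: "br (x(n - 1 := br y)) = (\<Sum>i<n. br (y(i := br (x(n - 1 := y i)))))"
  using PP[THEN conjunct2, THEN conjunct2, THEN conjunct2, THEN conjunct2, THEN conjunct2, THEN conjunct2, THEN conjunct2, THEN conjunct2, THEN conjunct2, THEN conjunct2, THEN conjunct1] by blast
lemma bLeib0: "br (x(0 := mult y z)) = mult y (br (x(0 := z))) + mult z (br (x(0 := y)))"
  using PP[THEN conjunct2, THEN conjunct2, THEN conjunct2, THEN conjunct2, THEN conjunct2, THEN conjunct2, THEN conjunct2, THEN conjunct2, THEN conjunct2, THEN conjunct2, THEN conjunct2] by blast

lemma madd2: "mult z (x + y) = mult z x + mult z y"
  by (metis madd mcomm)
lemma mscale2: "mult y (scale a x) = scale a (mult y x)"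
  by (metis mscale mcomm)

lemma bzero: "i < n \<Longrightarrow> br (x(i := 0)) = 0"
  using badd[of i x 0 0] by simp
lemma bneg: "i < n \<Longrightarrow> br (x(i := - y)) = - br (x(i := y))"
  using badd[of i x "-y" y] bzero[of i x] by (simp add: eq_neg_iff_add_eq_0)

lemma bswap:
  assumes "p < n" "q < n" "p \<noteq> q"
    and "\<And>i. i < n \<Longrightarrow> z i = (if i = p then x q else if i = q then x p else x i)"
  shows "br z = - br x"
proof (cases "p < q")
  case True
  have "br z = br (x(p := x q, q := x p))"
    by (rule bcong) (use assms in auto)
  also have "\<dots> = - br x" using bskew0[OF True assms(2)] .
  finally show ?thesis .
next
  case False
  then have qp: "q < p" using assms(3) by simp
  have "br z = br (x(q := x p, p := x q))"
    by (rule bcong) (use assms in auto)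
  also have "\<dots> = - br x" using bskew0[OF qp assms(1)] .
  finally show ?thesis .
qed

lemma bFI:
  assumes p: "p < n"
  shows "br (x(p := br y)) = (\<Sum>i<n. br (y(i := br (x(p := y i)))))"
proof (cases "p = n - 1")
  case True then show ?thesis using bFI0 by simp
next
  case False
  define x' where "x' = x(p := x (n - 1), n - 1 := x p)"
  have nn: "n - 1 < n" using n2 by simp
  have sw: "br (x(p := v)) = - br (x'(n - 1 := v))" for v
    by (rule bswap[OF p nn False]) (auto simp: x'_def)
  have "br (x(p := br y)) = - (\<Sum>i<n. br (y(i := br (x'(n - 1 := y i)))))"
    using sw bFI0 by simp
  also have "\<dots> = - (\<Sum>i<n. - br (y(i := br (x(p := y i)))))"
    by (intro arg_cong[where f=uminus] sum.cong refl) (simp add: sw bneg)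
  also have "\<dots> = (\<Sum>i<n. br (y(i := br (x(p := y i)))))"
    by (simp add: sum_negf)
  finally show ?thesis .
qed

lemma bLeib:
  assumes p: "p < n"
  shows "br (x(p := mult y z)) = mult y (br (x(p := z))) + mult z (br (x(p := y)))"
proof (cases "p = 0")
  case True then show ?thesis using bLeib0 by simp
next
  case False
  define x' where "x' = x(p := x 0, 0 := x p)"
  have n0: "0 < n" using n2 by simp
  have sw: "br (x(p := v)) = - br (x'(0 := v))" for v
    by (rule bswap[OF p n0 False]) (auto simp: x'_def)
  have mneg: "mult u (- v) = - mult u v" for u v
  proof -
    have m0: "mult u 0 = 0" using madd2[of u 0 0] by simp
    have "mult u (- v) + mult u v = 0" using madd2[of u "- v" v] m0 by simp
    then show ?thesis by (simp only: eq_neg_iff_add_eq_0)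
  qed
  have sw2: "br (x'(0 := v)) = - br (x(p := v))" for v
    using sw[of v] by simp
  have "br (x(p := mult y z)) = - br (x'(0 := mult y z))" by (rule sw)
  also have "\<dots> = - (mult y (br (x'(0 := z))) + mult z (br (x'(0 := y))))"
    by (simp only: bLeib0)
  also have "\<dots> = mult y (br (x(p := z))) + mult z (br (x(p := y)))"
    by (simp only: sw2 mneg minus_add_distrib minus_minus)
  finally show ?thesis .
qed


definition Q where "Q m = lower_aux scale mult br n UNIV m"

lemma Q0: "Q 0 = UNIV" by (simp add: Q_def)

lemma Q_Suc: "Q (Suc m) = vs.span (vs.span {br x |x. \<forall>i<n. x i \<in> (if i = 0 then Q m else if i = 1 then UNIV else UNIV)}
   \<union> vs.span {mult x y |x y. x \<in> Q m \<and> y \<in> UNIV})"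
  by (simp add: Q_def ssum_def sbr_def sprod_def Let_def)

lemma Qsub: "vs.subspace (Q m)"
  by (cases m) (simp_all add: Q0 Q_Suc)

lemma Qbr: "x 0 \<in> Q m \<Longrightarrow> br x \<in> Q (Suc m)"
  unfolding Q_Suc by (rule vs.span_base, rule UnI1, rule vs.span_base) auto

lemma Qmult: "x \<in> Q m \<Longrightarrow> mult x y \<in> Q (Suc m)"
  unfolding Q_Suc by (rule vs.span_base, rule UnI2, rule vs.span_base) auto

lemma Qind:
  assumes v: "v \<in> Q (Suc m)" and T: "vs.subspace T"
    and g1: "\<And>x. x 0 \<in> Q m \<Longrightarrow> br x \<in> T"
    and g2: "\<And>x y. x \<in> Q m \<Longrightarrow> mult x y \<in> T"
  shows "v \<in> T"
proof -
  have "Q (Suc m) \<subseteq> T"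
    unfolding Q_Suc
    using n2 by (intro vs.span_minimal T Un_least) (auto intro!: vs.span_minimal T g1 g2)
  then show ?thesis using v by auto
qed

lemma linind:
  assumes v: "v \<in> Q (Suc m)" and T: "vs.subspace T"
    and fa: "\<And>a b. f (a + b) = f a + f b"
    and fs: "\<And>c a. f (scale c a) = scale c (f a)"
    and g1: "\<And>x. x 0 \<in> Q m \<Longrightarrow> f (br x) \<in> T"
    and g2: "\<And>x y. x \<in> Q m \<Longrightarrow> f (mult x y) \<in> T"
  shows "f v \<in> T"
proof -
  have f0: "f 0 = 0" using fa[of 0 0] by simp
  have "vs.subspace {v. f v \<in> T}"
    using T unfolding vs.subspace_def by (auto simp: f0 fa fs)
  from Qind[OF v this] g1 g2 show ?thesis by auto
qed

lemma prodA: "x \<in> Q a \<Longrightarrow> y \<in> Q b \<Longrightarrow> mult x y \<in> Q (a + b + 1)"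
proof (induction b arbitrary: a x y)
  case 0
  then show ?case using Qmult by simp
next
  case (Suc b)
  show ?case
  proof (rule linind[where f = "mult x", OF Suc.prems(2) Qsub])
    fix c u v show "mult x (u + v) = mult x u + mult x v" by (rule madd2)
    show "mult x (scale c u) = scale c (mult x u)" by (rule mscale2)
  next
    fix z :: "nat \<Rightarrow> 'v" assume z0: "z 0 \<in> Q b"
    have e: "br (z(0 := mult x (z 0))) = mult x (br z) + mult (z 0) (br (z(0 := x)))"
      using bLeib0[of z x "z 0"] by (simp only: fun_upd_triv)
    have 1: "br (z(0 := mult x (z 0))) \<in> Q (a + Suc b + 1)"
      using Qbr[of "z(0 := mult x (z 0))"] Suc.IH[OF Suc.prems(1) z0] by simp
    have "br (z(0 := x)) \<in> Q (Suc a)" using Qbr[of "z(0 := x)"] Suc.prems(1) by simp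
    then have "mult (br (z(0 := x))) (z 0) \<in> Q (Suc a + b + 1)"
      by (rule Suc.IH[OF _ z0])
    then have 2: "mult (z 0) (br (z(0 := x))) \<in> Q (a + Suc b + 1)"
      by (simp add: mcomm[of "z 0" "br (z(0 := x))"])
    have "mult x (br z) = br (z(0 := mult x (z 0))) - mult (z 0) (br (z(0 := x)))"
      using e by simp
    then show "mult x (br z) \<in> Q (a + Suc b + 1)"
      using 1 2 vs.subspace_diff[OF Qsub] by simp
  next
    fix u w assume "u \<in> Q b"
    then have "mult x u \<in> Q (a + b + 1)" using Suc.IH Suc.prems(1) by blast
    then show "mult x (mult u w) \<in> Q (a + Suc b + 1)"
      using Qmult[of "mult x u" "a + b + 1" w] by (simp add: massoc)
  qed
qed

lemma B1: "i < n \<Longrightarrow> x i \<in> Q a \<Longrightarrow> br x \<in> Q (Suc a)"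
proof (cases "i = 0")
  case True
  assume "x i \<in> Q a" then show ?thesis using True Qbr by simp
next
  case False
  assume i: "i < n" and xi: "x i \<in> Q a"
  define x' where "x' = x(0 := x i, i := x 0)"
  have n0: "0 < n" using n2 by simp
  have "br x = - br x'"
    by (rule bswap[OF i n0 False]) (auto simp: x'_def)
  moreover have "br x' \<in> Q (Suc a)" using Qbr[of x'] xi False by (simp add: x'_def)
  ultimately show ?thesis using vs.subspace_neg[OF Qsub] by simp
qed

lemma B2: "i < n \<Longrightarrow> j < n \<Longrightarrow> i \<noteq> j \<Longrightarrow> x i \<in> Q a \<Longrightarrow> x j \<in> Q b \<Longrightarrow> br x \<in> Q (a + b + 1)"
proof (induction b arbitrary: a x i j)
  case 0
  then show ?case using B1 by simp
next
  case (Suc b)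
  have xx: "x = x(j := x j)" by simp
  have "br (x(j := x j)) \<in> Q (a + Suc b + 1)"
  proof (rule linind[where f = "\<lambda>v. br (x(j := v))", OF Suc.prems(5) Qsub])
    fix c u v show "br (x(j := u + v)) = br (x(j := u)) + br (x(j := v))" using badd Suc.prems by blast
    show "br (x(j := scale c u)) = scale c (br (x(j := u)))" using bscale Suc.prems by blast
  next
    fix y :: "nat \<Rightarrow> 'v" assume y0: "y 0 \<in> Q b"
    show "br (x(j := br y)) \<in> Q (a + Suc b + 1)"
      unfolding bFI[OF Suc.prems(2)]
    proof (rule vs.subspace_sum[OF Qsub])
      fix t assume "t \<in> {..<n}"
      then have t: "t < n" by simp
      show "br (y(t := br (x(j := y t)))) \<in> Q (a + Suc b + 1)"
      proof (cases "t = 0")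
        case True
        have "br (x(j := y 0)) \<in> Q (a + b + 1)"
          by (rule Suc.IH[of i j]) (use Suc.prems y0 in auto)
        then show ?thesis using Qbr[of "y(t := br (x(j := y t)))"] True by simp
      next
        case False
        have "br (x(j := y t)) \<in> Q (Suc a)"
          using B1[of i "x(j := y t)" a] Suc.prems by simp
        then have "br (y(t := br (x(j := y t)))) \<in> Q (Suc a + b + 1)"
          by (intro Suc.IH[of t 0]) (use t False y0 n2 in auto)
        then show ?thesis by simp
      qed
    qed
  next
    fix v w assume v: "v \<in> Q b"
    have 1: "br (x(j := w)) \<in> Q (Suc a)"
      using B1[of i "x(j := w)" a] Suc.prems by simp
    have 2: "br (x(j := v)) \<in> Q (a + b + 1)"
      by (rule Suc.IH[of i j]) (use Suc.prems v in auto)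
    have e1: "b + Suc a + 1 = a + Suc b + 1" by simp
    have 3: "mult v (br (x(j := w))) \<in> Q (a + Suc b + 1)"
      using prodA[OF v 1] unfolding e1 .
    have w0: "w \<in> Q 0" by (simp add: Q0)
    have e2: "a + b + 1 + 0 + 1 = a + Suc b + 1" by simp
    have "mult (br (x(j := v))) w \<in> Q (a + Suc b + 1)"
      using prodA[OF 2 w0] unfolding e2 .
    then have 4: "mult w (br (x(j := v))) \<in> Q (a + Suc b + 1)"
      by (subst mcomm)
    show "br (x(j := mult v w)) \<in> Q (a + Suc b + 1)"
      unfolding bLeib[OF Suc.prems(2)] by (rule vs.subspace_add[OF Qsub 3 4])
  qed
  then show ?case by simp
qed


lemma Bgen: "(\<forall>i<n. x i \<in> Q (e i)) \<Longrightarrow> br x \<in> Q (sum e {..<n} + 1)"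
proof (induction "sum e {..<n}" arbitrary: x e rule: less_induct)
  case less
  show ?case
  proof (cases "\<forall>i<n. e i = 0")
    case True
    then have "sum e {..<n} = 0" by simp
    moreover have "br x \<in> Q (Suc 0)" using B1[of 0 x 0] n2 Q0 by simp
    ultimately show ?thesis by simp
  next
    case False
    then obtain j where j: "j < n" and ej0: "e j \<noteq> 0" by blast
    then obtain c where ej: "e j = Suc c" using not0_implies_Suc by blast
    define R where "R = sum e ({..<n} - {j})"
    have sumd: "sum (e(j := d)) {..<n} = d + R" for d
    proof -
      have "sum (e(j := d)) {..<n} = (e(j := d)) j + sum (e(j := d)) ({..<n} - {j})"
        using j by (intro sum.remove) auto
      also have "sum (e(j := d)) ({..<n} - {j}) = R"
        unfolding R_def by (intro sum.cong) auto
      finally show ?thesis by simp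
    qed
    have ee: "e(j := Suc c) = e" using ej by auto
    have N: "sum e {..<n} = Suc c + R" using sumd[of "Suc c"] unfolding ee .
    have IH: "br x' \<in> Q (d + R + 1)"
      if d: "d \<le> c" and H: "\<forall>i<n. x' i \<in> Q ((e(j := d)) i)" for x' d
    proof -
      have lt: "sum (e(j := d)) {..<n} < sum e {..<n}" using sumd[of d] N d by simp
      have "br x' \<in> Q (sum (e(j := d)) {..<n} + 1)"
        by (rule less.hyps[OF lt H])
      then show ?thesis using sumd[of d] by simp
    qed
    have xj: "x j \<in> Q (Suc c)" using less.prems j ej by metis
    have "br (x(j := x j)) \<in> Q (Suc c + R + 1)"
    proof (rule linind[where f = "\<lambda>v. br (x(j := v))", OF xj Qsub])
      fix c' u v show "br (x(j := u + v)) = br (x(j := u)) + br (x(j := v))" using badd j by blast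
      show "br (x(j := scale c' u)) = scale c' (br (x(j := u)))" using bscale j by blast
    next
      fix y :: "nat \<Rightarrow> 'v" assume y0: "y 0 \<in> Q c"
      show "br (x(j := br y)) \<in> Q (Suc c + R + 1)"
        unfolding bFI[OF j]
      proof (rule vs.subspace_sum[OF Qsub])
        fix t assume "t \<in> {..<n}"
        then have t: "t < n" by simp
        show "br (y(t := br (x(j := y t)))) \<in> Q (Suc c + R + 1)"
        proof (cases "t = 0")
          case True
          have "br (x(j := y 0)) \<in> Q (c + R + 1)"
            by (rule IH) (use less.prems y0 in auto)
          then show ?thesis using Qbr[of "y(t := br (x(j := y t)))"] True by simp
        next
          case False
          have "br (x(j := y t)) \<in> Q (0 + R + 1)"
            by (rule IH) (use less.prems Q0 in auto)
          then have "br (y(t := br (x(j := y t)))) \<in> Q ((0 + R + 1) + c + 1)"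
            by (intro B2[of t 0]) (use t False y0 n2 in auto)
          then show ?thesis by (simp add: add.commute)
        qed
      qed
    next
      fix v w assume v: "v \<in> Q c"
      have 1: "br (x(j := w)) \<in> Q (0 + R + 1)"
        by (rule IH) (use less.prems Q0 in auto)
      have 2: "br (x(j := v)) \<in> Q (c + R + 1)"
        by (rule IH) (use less.prems v in auto)
      have e1: "c + (0 + R + 1) + 1 = Suc c + R + 1" by simp
      have 3: "mult v (br (x(j := w))) \<in> Q (Suc c + R + 1)"
        using prodA[OF v 1] unfolding e1 .
      have w0: "w \<in> Q 0" by (simp add: Q0)
      have e2: "c + R + 1 + 0 + 1 = Suc c + R + 1" by simp
      have "mult (br (x(j := v))) w \<in> Q (Suc c + R + 1)"
        using prodA[OF 2 w0] unfolding e2 .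
      then have 4: "mult w (br (x(j := v))) \<in> Q (Suc c + R + 1)"
        by (subst mcomm)
      show "br (x(j := mult v w)) \<in> Q (Suc c + R + 1)"
        unfolding bLeib[OF j] by (rule vs.subspace_add[OF Qsub 3 4])
    qed
    then show ?thesis using N by simp
  qed
qed

lemma lowerQ: "lower scale mult br n UNIV i = Q (i - 1)"
  by (simp add: lower_def Q_def)

lemma part1:
  assumes "1 \<le> i" "1 \<le> j"
  shows "sprod scale mult (lower scale mult br n UNIV i) (lower scale mult br n UNIV j)
          \<subseteq> lower scale mult br n UNIV (i + j)"
  unfolding lowerQ sprod_def
proof (rule vs.span_minimal[OF _ Qsub], safe)
  fix x y assume "x \<in> Q (i - 1)" "y \<in> Q (j - 1)"
  then have m: "mult x y \<in> Q (i - 1 + (j - 1) + 1)" by (rule prodA)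
  have eq: "i - 1 + (j - 1) + 1 = i + j - 1" using assms by simp
  show "mult x y \<in> Q (i + j - 1)" using m unfolding eq .
qed

lemma part2:
  assumes k1: "1 \<le> k" and kn: "k \<le> n" and ii: "\<forall>m<k. 1 \<le> ii m"
  shows "sbr scale br n (\<lambda>m. if m < k then lower scale mult br n UNIV (ii m) else UNIV)
          \<subseteq> lower scale mult br n UNIV ((\<Sum>m<k. ii m) + 2 - k)"
  unfolding lowerQ sbr_def
proof (rule vs.span_minimal[OF _ Qsub], safe)
  fix x assume x: "\<forall>i<n. x i \<in> (if i < k then Q (ii i - 1) else UNIV)"
  define e where "e m = (if m < k then ii m - 1 else 0)" for m
  have "\<forall>i<n. x i \<in> Q (e i)" using x by (auto simp: e_def Q0)
  then have b: "br x \<in> Q (sum e {..<n} + 1)" by (rule Bgen)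
  have s1: "sum e {..<n} = sum e {..<k}"
    using kn by (intro sum.mono_neutral_right) (auto simp: e_def)
  have s2: "sum e {..<k} = (\<Sum>m<k. ii m - 1)" by (simp add: e_def)
  have "(\<Sum>m<k. ii m) = (\<Sum>m<k. (ii m - 1) + 1)"
    by (rule sum.cong) (use ii in auto)
  also have "\<dots> = (\<Sum>m<k. ii m - 1) + (\<Sum>m<k. (1::nat))" by (rule sum.distrib)
  finally have s3: "(\<Sum>m<k. ii m) = (\<Sum>m<k. ii m - 1) + k" by simp
  have "(\<Sum>m<k. ii m) + 2 - k - 1 = sum e {..<n} + 1" using s1 s2 s3 by simp
  then show "br x \<in> Q ((\<Sum>m<k. ii m) + 2 - k - 1)" using b by simp
qed

lemma part3aux: "derived_aux scale mult br n UNIV m \<subseteq> Q (2 ^ m - 1)"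
proof (induction m)
  case 0
  then show ?case by (simp add: Q0)
next
  case (Suc m)
  let ?D = "derived_aux scale mult br n UNIV m"
  have p: "(1::nat) \<le> 2 ^ m" by simp
  have h: "(2::nat) ^ Suc m = 2 ^ m + 2 ^ m" by simp
  have ar: "2 ^ m - 1 + (2 ^ m - 1) + 1 = (2::nat) ^ Suc m - 1" using p h by arith
  have A: "sbr scale br n (\<lambda>t. if t = 0 then ?D else if t = 1 then ?D else UNIV) \<subseteq> Q (2 ^ Suc m - 1)"
    unfolding sbr_def
  proof (rule vs.span_minimal[OF _ Qsub], safe)
    fix x assume x: "\<forall>i<n. x i \<in> (if i = 0 then ?D else if i = 1 then ?D else UNIV)"
    have n01: "0 < n" "1 < n" using n2 by auto
    have "x 0 \<in> ?D" using x[rule_format, OF n01(1)] by simp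
    moreover have "x 1 \<in> ?D" using x[rule_format, OF n01(2)] by simp
    ultimately have "x 0 \<in> Q (2 ^ m - 1)" "x 1 \<in> Q (2 ^ m - 1)" using Suc.IH by blast+
    then have "br x \<in> Q (2 ^ m - 1 + (2 ^ m - 1) + 1)"
      by (intro B2[of 0 1]) (use n2 in auto)
    then show "br x \<in> Q (2 ^ Suc m - 1)" unfolding ar .
  qed
  have B: "sprod scale mult ?D ?D \<subseteq> Q (2 ^ Suc m - 1)"
    unfolding sprod_def
  proof (rule vs.span_minimal[OF _ Qsub], safe)
    fix x y assume "x \<in> ?D" "y \<in> ?D"
    then have "mult x y \<in> Q (2 ^ m - 1 + (2 ^ m - 1) + 1)"
      using Suc.IH by (intro prodA) auto
    then show "mult x y \<in> Q (2 ^ Suc m - 1)" unfolding ar .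
  qed
  show ?case
    unfolding derived_aux.simps Let_def ssum_def
    by (rule vs.span_minimal[OF _ Qsub]) (use A B in blast)
qed

lemma part3: "1 \<le> i \<Longrightarrow> derived scale mult br n UNIV i \<subseteq> lower scale mult br n UNIV (2 ^ (i - 1))"
  unfolding lowerQ derived_def by (rule part3aux)

end

lemma da: "derived_aux scale mult br n (derived_aux scale mult br n UNIV a) b = derived_aux scale mult br n UNIV (a + b)"
  by (induction b) (simp_all add: Let_def)

lemma part4:
  assumes "1 \<le> i" "1 \<le> j"
  shows "derived scale mult br n (derived scale mult br n UNIV i) j = derived scale mult br n UNIV (i + j - 1)"
proof -
  have "i + j - 1 - 1 = i - 1 + (j - 1)" using assms by simp
  then show ?thesis unfolding derived_def da by simp
qed

theorem lemma5p2:
  fixes scale :: "'k::field \<Rightarrow> 'v::ab_group_add \<Rightarrow> 'v"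
    and mult :: "'v \<Rightarrow> 'v \<Rightarrow> 'v"
    and br :: "(nat \<Rightarrow> 'v) \<Rightarrow> 'v"
    and n :: nat
  assumes P: "poisson_nlie scale mult br n"
    and fd: "fin_dim scale"
  shows
    "(\<forall>i j. 1 \<le> i \<longrightarrow> 1 \<le> j \<longrightarrow>
        sprod scale mult (lower scale mult br n UNIV i) (lower scale mult br n UNIV j)
          \<subseteq> lower scale mult br n UNIV (i + j))
   \<and> (\<forall>k (ii :: nat \<Rightarrow> nat). 1 \<le> k \<longrightarrow> k \<le> n \<longrightarrow> (\<forall>m<k. 1 \<le> ii m) \<longrightarrow>
        sbr scale br n (\<lambda>m. if m < k then lower scale mult br n UNIV (ii m) else UNIV)
          \<subseteq> lower scale mult br n UNIV ((\<Sum>m<k. ii m) + 2 - k))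
   \<and> (\<forall>i. 1 \<le> i \<longrightarrow>
        derived scale mult br n UNIV i \<subseteq> lower scale mult br n UNIV (2 ^ (i - 1)))
   \<and> (\<forall>i j. 1 \<le> i \<longrightarrow> 1 \<le> j \<longrightarrow>
        derived scale mult br n (derived scale mult br n UNIV i) j
          = derived scale mult br n UNIV (i + j - 1))"
proof -
  interpret pn scale mult br n by (rule pn.intro[OF P])
  show ?thesis using part1 part2 part3 part4 by blast
qed

end
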